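(* Let $f:\mathbb{R}^d\times\mathcal{X}\to\mathbb{R}$ be differentiable in $\theta$, where $\mathcal{X}$ is a subset of a Euclidean space with $\sup_{x\in\mathcal{X}}\Vert x\Vert\le D<\infty$. Assume (A1): there are $K_1,K_2>0$ with $\Vert\nabla f(\theta,x)-\nabla f(\hat\theta,\hat x)\Vert\le K_1\Vert\theta-\hat\theta\Vert+K_2\Vert x-\hat x\Vert(\Vert\theta\Vert+\Vert\hat\theta\Vert+1)$ for all $\theta,\hat\theta\in\mathbb{R}^d$, $x,\hat x\in\mathcal{X}$; and (A2): there is $\mu>0$ with $\langle\nabla f(\theta_1,x)-\nabla f(\theta_2,x),\theta_1-\theta_2\rangle\ge\mu\Vert\theta_1-\theta_2\Vert^2$ for all $\theta_1,\theta_2,x$. Let $\hat x_1,\dots,\hat x_n\in\mathcal{X}$, $b\in\{1,\dots,n\}$, let $\hat\theta_*$ be the minimizer of $\hat F(\theta,\hat X_n):=\frac1n\sum_{i=1}^nf(\theta,\hat x_i)$, and let $\hat V(\theta):=1+\Vert\theta-\hat\theta_*\Vert^2$. Let $\hat P$ be the transition kernel of $\hat\theta_k=\hat\theta_{k-1}-\frac{\eta}{b}\sum_{i\in\Omega_k}\nabla f(\hat\theta_{k-1},\hat x_i)$, with $(\Omega_k)$ i.i.d. uniformly random $b$-subsets of $\{1,\dots,n\}$. If $\eta<\min\left\{\frac1\mu,\frac{\mu}{K_1^2+64D^2K_2^2}\right\}$, then for all $\theta\in\mathbb{R}^d$, $$(\hat P\hat V)(\theta)\le(1-\eta\mu)\hat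 V(\theta)+2\eta\mu-\eta^2K_1^2-56\eta^2D^2K_2^2+64\eta^2D^2K_2^2\Vert\hat\theta_*\Vert^2.$$
   Context: $(\hat P\hat V)(\theta)=\mathbb{E}[\hat V(\hat\theta_1)\mid\hat\theta_0=\theta]$. *)

theory Defs
  imports "HOL-Probability.Probability"
begin

definition Fhat :: "('a \<Rightarrow> 'b \<Rightarrow> real) \<Rightarrow> (nat \<Rightarrow> 'b) \<Rightarrow> nat \<Rightarrow> 'a \<Rightarrow> real" where
  "Fhat f xh n \<theta> = (1 / real n) * (\<Sum>i=1..n. f \<theta> (xh i))"

definition Vhat :: "'a::real_normed_vector \<Rightarrow> 'a \<Rightarrow> real" where
  "Vhat \<theta>s \<theta> = 1 + (norm (\<theta> - \<theta>s))\<^sup>2"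

definition minibatch :: "nat \<Rightarrow> nat \<Rightarrow> nat set pmf" where
  "minibatch n b = pmf_of_set {\<Omega>. \<Omega> \<subseteq> {1..n} \<and> card \<Omega> = b}"

definition sgd_step :: "('a::real_vector \<Rightarrow> 'b \<Rightarrow> 'a) \<Rightarrow> (nat \<Rightarrow> 'b) \<Rightarrow> nat \<Rightarrow> real \<Rightarrow> nat set \<Rightarrow> 'a \<Rightarrow> 'a" where
  "sgd_step grad xh b \<eta> \<Omega> \<theta> = \<theta> - (\<eta> / real b) *\<^sub>R (\<Sum>i\<in>\<Omega>. grad \<theta> (xh i))"

definition Phat :: "('a::real_vector \<Rightarrow> 'b \<Rightarrow> 'a) \<Rightarrow> (nat \<Rightarrow> 'b) \<Rightarrow> nat \<Rightarrow> nat \<Rightarrow> real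
                    \<Rightarrow> ('a \<Rightarrow> real) \<Rightarrow> 'a \<Rightarrow> real" where
  "Phat grad xh n b \<eta> V \<theta> =
     measure_pmf.expectation (minibatch n b) (\<lambda>\<Omega>. V (sgd_step grad xh b \<eta> \<Omega> \<theta>))"

end

theory Submission
  imports Defs
begin

lemma card_subsets_containing:
  assumes A: "finite A" and i: "i \<in> A" and k: "k \<ge> 1"
  shows "card {\<Omega>. (\<Omega> \<subseteq> A \<and> card \<Omega> = k) \<and> i \<in> \<Omega>} = (card A - 1) choose (k - 1)"
proof -
  have "bij_betw (\<lambda>\<Omega>. \<Omega> - {i}) {\<Omega>. (\<Omega> \<subseteq> A \<and> card \<Omega> = k) \<and> i \<in> \<Omega>} {T. T \<subseteq> A - {i} \<and> card T = k - 1}"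
  proof (rule bij_betw_byWitness[where f' = "\<lambda>T. insert i T"])
    show "\<forall>a\<in>{\<Omega>. (\<Omega> \<subseteq> A \<and> card \<Omega> = k) \<and> i \<in> \<Omega>}. insert i (a - {i}) = a" by auto
    show "\<forall>a'\<in>{T. T \<subseteq> A - {i} \<and> card T = k - 1}. insert i a' - {i} = a'" by auto
    show "(\<lambda>\<Omega>. \<Omega> - {i}) ` {\<Omega>. (\<Omega> \<subseteq> A \<and> card \<Omega> = k) \<and> i \<in> \<Omega>} \<subseteq> {T. T \<subseteq> A - {i} \<and> card T = k - 1}"
      using A by (auto dest: finite_subset)
    show "insert i ` {T. T \<subseteq> A - {i} \<and> card T = k - 1} \<subseteq> {\<Omega>. (\<Omega> \<subseteq> A \<and> card \<Omega> = k) \<and> i \<in> \<Omega>}"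
    proof
      fix X assume "X \<in> insert i ` {T. T \<subseteq> A - {i} \<and> card T = k - 1}"
      then obtain T where T: "T \<subseteq> A - {i}" "card T = k - 1" "X = insert i T" by auto
      have "finite T" using T A finite_subset by blast
      moreover have "i \<notin> T" using T by auto
      ultimately have "card X = k" using T k by simp
      then show "X \<in> {\<Omega>. (\<Omega> \<subseteq> A \<and> card \<Omega> = k) \<and> i \<in> \<Omega>}" using T i by auto
    qed
  qed
  then have "card {\<Omega>. (\<Omega> \<subseteq> A \<and> card \<Omega> = k) \<and> i \<in> \<Omega>} = card {T. T \<subseteq> A - {i} \<and> card T = k - 1}"
    by (rule bij_betw_same_card)
  also have "\<dots> = card (A - {i}) choose (k - 1)" using A by (intro n_subsets) auto
  finally show ?thesis using A i by simp
qed

lemma sum_subsets_sum: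
  fixes \<psi> :: "'c \<Rightarrow> real"
  assumes A: "finite A" and k: "k \<ge> 1"
  shows "(\<Sum>\<Omega>\<in>{\<Omega>. \<Omega> \<subseteq> A \<and> card \<Omega> = k}. \<Sum>i\<in>\<Omega>. \<psi> i) = real ((card A - 1) choose (k - 1)) * (\<Sum>i\<in>A. \<psi> i)"
proof -
  let ?S = "{\<Omega>. \<Omega> \<subseteq> A \<and> card \<Omega> = k}"
  have finS: "finite ?S" using A by simp
  have "(\<Sum>\<Omega>\<in>?S. \<Sum>i\<in>\<Omega>. \<psi> i) = (\<Sum>\<Omega>\<in>?S. \<Sum>i\<in>A. if i \<in> \<Omega> then \<psi> i else 0)"
  proof (rule sum.cong[OF refl])
    fix \<Omega> assume "\<Omega> \<in> ?S"
    then have "\<Omega> \<subseteq> A" by auto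
    then have "\<Omega> = A \<inter> \<Omega>" by auto
    then show "(\<Sum>i\<in>\<Omega>. \<psi> i) = (\<Sum>i\<in>A. if i \<in> \<Omega> then \<psi> i else 0)"
      using A by (metis (no_types) sum.inter_restrict)
  qed
  also have "\<dots> = (\<Sum>i\<in>A. \<Sum>\<Omega>\<in>?S. if i \<in> \<Omega> then \<psi> i else 0)" by (rule sum.swap)
  also have "\<dots> = (\<Sum>i\<in>A. \<psi> i * real ((card A - 1) choose (k - 1)))"
  proof (rule sum.cong[OF refl])
    fix i assume i: "i \<in> A"
    have "(\<Sum>\<Omega>\<in>?S. if i \<in> \<Omega> then \<psi> i else 0) = (\<Sum>\<Omega>\<in>{\<Omega>\<in>?S. i \<in> \<Omega>}. \<psi> i)"
      using sum.inter_filter[OF finS, where P="\<lambda>\<Omega>. i \<in> \<Omega>" and g="\<lambda>_. \<psi> i"] by simp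
    also have "\<dots> = \<psi> i * real (card {\<Omega>. (\<Omega> \<subseteq> A \<and> card \<Omega> = k) \<and> i \<in> \<Omega>})" by simp
    also have "\<dots> = \<psi> i * real ((card A - 1) choose (k - 1))"
      using card_subsets_containing[OF A i k] by simp
    finally show "(\<Sum>\<Omega>\<in>?S. if i \<in> \<Omega> then \<psi> i else 0) = \<psi> i * real ((card A - 1) choose (k - 1))" .
  qed
  also have "\<dots> = real ((card A - 1) choose (k - 1)) * (\<Sum>i\<in>A. \<psi> i)"
    by (simp add: sum_distrib_right mult.commute)
  finally show ?thesis .
qed


lemma norm_diff_sq: "(norm (x - y :: 'a::real_inner))\<^sup>2 = (norm x)\<^sup>2 - 2 * (x \<bullet> y) + (norm y)\<^sup>2"
  by (simp add: power2_norm_eq_inner inner_diff_left inner_diff_right inner_commute)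

theorem lemmaC2:
  fixes f :: "'a::euclidean_space \<Rightarrow> 'b::euclidean_space \<Rightarrow> real"
    and grad :: "'a \<Rightarrow> 'b \<Rightarrow> 'a"
    and X :: "'b set"
    and D K1 K2 \<mu> \<eta> :: real
    and xh :: "nat \<Rightarrow> 'b"
    and n b :: nat
    and \<theta>s :: 'a
  assumes grad: "\<And>\<theta> x. x \<in> X \<Longrightarrow> ((\<lambda>t. f t x) has_derivative (\<lambda>h. grad \<theta> x \<bullet> h)) (at \<theta>)"
    and bounded: "\<forall>x\<in>X. norm x \<le> D"
    and K1: "K1 > 0" and K2: "K2 > 0"
    and A1: "\<And>\<theta> \<theta>' x x'. x \<in> X \<Longrightarrow> x' \<in> X \<Longrightarrow>
               norm (grad \<theta> x - grad \<theta>' x') \<le>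
                 K1 * norm (\<theta> - \<theta>') + K2 * norm (x - x') * (norm \<theta> + norm \<theta>' + 1)"
    and mu: "\<mu> > 0"
    and A2: "\<And>\<theta>1 \<theta>2 x. x \<in> X \<Longrightarrow>
               (grad \<theta>1 x - grad \<theta>2 x) \<bullet> (\<theta>1 - \<theta>2) \<ge> \<mu> * (norm (\<theta>1 - \<theta>2))\<^sup>2"
    and xh: "\<And>i. i \<in> {1..n} \<Longrightarrow> xh i \<in> X"
    and b: "b \<in> {1..n}"
    and minimizer: "\<And>\<theta>. Fhat f xh n \<theta>s \<le> Fhat f xh n \<theta>"
    and eta_pos: "\<eta> > 0"
    and eta: "\<eta> < min (1 / \<mu>) (\<mu> / (K1\<^sup>2 + 64 * D\<^sup>2 * K2\<^sup>2))"
  shows "\<forall>\<theta>. Phat grad xh n b \<eta> (Vhat \<theta>s) \<theta> \<le>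
           (1 - \<eta> * \<mu>) * Vhat \<theta>s \<theta> + 2 * \<eta> * \<mu> - \<eta>\<^sup>2 * K1\<^sup>2 - 56 * \<eta>\<^sup>2 * D\<^sup>2 * K2\<^sup>2
           + 64 * \<eta>\<^sup>2 * D\<^sup>2 * K2\<^sup>2 * (norm \<theta>s)\<^sup>2"
proof
  fix \<theta> :: 'a
  have b1: "1 \<le> b" and bn: "b \<le> n" using b by auto
  have n1: "1 \<le> n" using b1 bn by linarith
  have npos: "real n > 0" using n1 by simp
  have bpos: "real b > 0" using b1 by simp
  define G where "G i t = grad t (xh i)" for i t
  have D0: "0 \<le> D" using bounded xh[of 1] n1 by (meson atLeastAtMost_iff le_refl norm_ge_zero order_trans)
  have xD: "norm (xh i) \<le> D" if "i \<in> {1..n}" for i using bounded xh[OF that] by blast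
  have zero: "(\<Sum>i=1..n. G i \<theta>s) = 0"
  proof -
    have Fh: "Fhat f xh n = (\<lambda>t. (1 / real n) * (\<Sum>i=1..n. f t (xh i)))"
      by (rule ext) (simp add: Fhat_def)
    have "((\<lambda>t. (1 / real n) * (\<Sum>i=1..n. f t (xh i))) has_derivative
           (\<lambda>h. (1 / real n) * (\<Sum>i=1..n. G i \<theta>s \<bullet> h))) (at \<theta>s)"
    proof -
      have "\<And>i. i \<in> {1..n} \<Longrightarrow> ((\<lambda>t. f t (xh i)) has_derivative (\<lambda>h. G i \<theta>s \<bullet> h)) (at \<theta>s)"
        unfolding G_def using grad xh by blast
      then show ?thesis by (intro has_derivative_mult_right has_derivative_sum) auto
    qed
    moreover have "eventually (\<lambda>y. (\<lambda>t. (1 / real n) * (\<Sum>i=1..n. f t (xh i))) \<theta>s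
                    \<le> (\<lambda>t. (1 / real n) * (\<Sum>i=1..n. f t (xh i))) y) (at \<theta>s)"
      using minimizer unfolding Fh by (simp add: always_eventually)
    ultimately have "(\<lambda>h. (1 / real n) * (\<Sum>i=1..n. G i \<theta>s \<bullet> h)) = (\<lambda>h. 0)"
      by (rule has_derivative_local_min)
    then have "(1 / real n) * (\<Sum>i=1..n. G i \<theta>s \<bullet> (\<Sum>i=1..n. G i \<theta>s)) = 0"
      by meson
    then have "(\<Sum>i=1..n. G i \<theta>s) \<bullet> (\<Sum>i=1..n. G i \<theta>s) = 0"
      using npos by (simp add: inner_sum_left)
    then show ?thesis by simp
  qed
  define \<Delta> where "\<Delta> = \<theta> - \<theta>s"
  define r where "r = norm \<Delta>"
  define m where "m = (1 / real n) *\<^sub>R (\<Sum>i=1..n. G i \<theta>)"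
  define M where "M = 2 * D * K2 * (2 * norm \<theta> + 1)"
  define u where "u = \<Delta> - \<eta> *\<^sub>R m"
  define e where "e \<Omega> = (1 / real b) *\<^sub>R (\<Sum>i\<in>\<Omega>. G i \<theta> - m)" for \<Omega>
  define S where "S = {\<Omega>. \<Omega> \<subseteq> {1..n} \<and> card \<Omega> = b}"
  have finS: "finite S" unfolding S_def by simp
  have "{1..b} \<in> S" unfolding S_def using bn by auto
  then have neS: "S \<noteq> {}" by auto
  have M0: "0 \<le> M" unfolding M_def using D0 K2 by simp
  have Gm: "norm (G i \<theta> - m) \<le> M" if i: "i \<in> {1..n}" for i
  proof -
    have "G i \<theta> - m = (1 / real n) *\<^sub>R (\<Sum>j=1..n. G i \<theta> - G j \<theta>)"
      using npos by (simp add: m_def sum_subtractf scaleR_diff_right sum_constant_scaleR)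
    then have "norm (G i \<theta> - m) \<le> (1 / real n) * (\<Sum>j=1..n. norm (G i \<theta> - G j \<theta>))"
      using npos by (simp add: norm_sum divide_right_mono)
    also have "\<dots> \<le> (1 / real n) * (\<Sum>j=1..n. M)"
    proof (intro mult_left_mono sum_mono)
      fix j assume j: "j \<in> {1..n}"
      have "norm (G i \<theta> - G j \<theta>) \<le> K1 * norm (\<theta> - \<theta>) + K2 * norm (xh i - xh j) * (norm \<theta> + norm \<theta> + 1)"
        unfolding G_def by (rule A1) (auto intro: xh i j)
      also have "\<dots> = K2 * norm (xh i - xh j) * (2 * norm \<theta> + 1)" by simp
      also have "\<dots> \<le> K2 * (2 * D) * (2 * norm \<theta> + 1)"
      proof -
        have "norm (xh i - xh j) \<le> norm (xh i) + norm (xh j)" by (rule norm_triangle_ineq4)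
        also have "\<dots> \<le> 2 * D" using xD[OF i] xD[OF j] by simp
        finally show ?thesis using K2 by (intro mult_right_mono mult_left_mono) auto
      qed
      finally show "norm (G i \<theta> - G j \<theta>) \<le> M" by (simp add: M_def algebra_simps)
    qed simp
    also have "\<dots> = M" using npos by simp
    finally show ?thesis .
  qed
  have eM: "norm (e \<Omega>) \<le> M" if "\<Omega> \<in> S" for \<Omega>
  proof -
    have sub: "\<Omega> \<subseteq> {1..n}" and cb: "card \<Omega> = b" using that by (auto simp: S_def)
    have "norm (e \<Omega>) \<le> (1 / real b) * (\<Sum>i\<in>\<Omega>. norm (G i \<theta> - m))"
      using bpos by (simp add: e_def norm_sum divide_right_mono)
    also have "\<dots> \<le> (1 / real b) * (\<Sum>i\<in>\<Omega>. M)"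
      using sub Gm by (intro mult_left_mono sum_mono) auto
    also have "\<dots> = M" using bpos cb by simp
    finally show ?thesis .
  qed
  have step: "sgd_step grad xh b \<eta> \<Omega> \<theta> - \<theta>s = u - \<eta> *\<^sub>R e \<Omega>" if "\<Omega> \<in> S" for \<Omega>
  proof -
    have cb: "card \<Omega> = b" using that by (auto simp: S_def)
    have "(\<Sum>i\<in>\<Omega>. G i \<theta>) = (\<Sum>i\<in>\<Omega>. G i \<theta> - m) + real b *\<^sub>R m"
      using cb by (simp add: sum_subtractf sum_constant_scaleR)
    then have "(\<eta> / real b) *\<^sub>R (\<Sum>i\<in>\<Omega>. G i \<theta>) = \<eta> *\<^sub>R e \<Omega> + \<eta> *\<^sub>R m"
      using bpos by (simp add: e_def scaleR_add_right)
    then show ?thesis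
      by (simp add: sgd_step_def u_def \<Delta>_def G_def[symmetric] algebra_simps)
  qed
  have sum_e: "(\<Sum>\<Omega>\<in>S. u \<bullet> e \<Omega>) = 0"
  proof -
    have "(\<Sum>\<Omega>\<in>S. u \<bullet> e \<Omega>) = (1 / real b) * (\<Sum>\<Omega>\<in>S. \<Sum>i\<in>\<Omega>. u \<bullet> (G i \<theta> - m))"
      by (simp add: e_def inner_sum_right sum_distrib_left)
    also have "\<dots> = (1 / real b) * (real ((card {1..n} - 1) choose (b - 1)) * (\<Sum>i\<in>{1..n}. u \<bullet> (G i \<theta> - m)))"
      unfolding S_def using b1 by (subst sum_subsets_sum) auto
    also have "(\<Sum>i\<in>{1..n}. u \<bullet> (G i \<theta> - m)) = 0"
    proof -
      have "(\<Sum>i\<in>{1..n}. G i \<theta> - m) = 0"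
        using npos by (simp add: sum_subtractf m_def sum_constant_scaleR)
      then show ?thesis by (simp add: inner_sum_right[symmetric])
    qed
    finally show ?thesis by simp
  qed
  have Vs: "Vhat \<theta>s (sgd_step grad xh b \<eta> \<Omega> \<theta>) \<le> 1 + (norm u)\<^sup>2 + \<eta>\<^sup>2 * M\<^sup>2 - 2 * \<eta> * (u \<bullet> e \<Omega>)"
    if "\<Omega> \<in> S" for \<Omega>
  proof -
    have "Vhat \<theta>s (sgd_step grad xh b \<eta> \<Omega> \<theta>) = 1 + (norm u)\<^sup>2 - 2 * \<eta> * (u \<bullet> e \<Omega>) + \<eta>\<^sup>2 * (norm (e \<Omega>))\<^sup>2"
      by (simp add: Vhat_def step[OF that] norm_diff_sq power_mult_distrib)
    moreover have "(norm (e \<Omega>))\<^sup>2 \<le> M\<^sup>2" using eM[OF that] by (simp add: power_mono)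
    then have "\<eta>\<^sup>2 * (norm (e \<Omega>))\<^sup>2 \<le> \<eta>\<^sup>2 * M\<^sup>2" by (rule mult_left_mono) simp
    ultimately show ?thesis by linarith
  qed
  have Pbound: "Phat grad xh n b \<eta> (Vhat \<theta>s) \<theta> \<le> 1 + (norm u)\<^sup>2 + \<eta>\<^sup>2 * M\<^sup>2"
  proof -
    have "Phat grad xh n b \<eta> (Vhat \<theta>s) \<theta> = (\<Sum>\<Omega>\<in>S. Vhat \<theta>s (sgd_step grad xh b \<eta> \<Omega> \<theta>)) / real (card S)"
      unfolding Phat_def minibatch_def S_def[symmetric]
      by (rule integral_pmf_of_set[OF neS finS])
    also have "\<dots> \<le> (\<Sum>\<Omega>\<in>S. 1 + (norm u)\<^sup>2 + \<eta>\<^sup>2 * M\<^sup>2 - 2 * \<eta> * (u \<bullet> e \<Omega>)) / real (card S)"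
      by (intro divide_right_mono sum_mono Vs) auto
    also have "(\<Sum>\<Omega>\<in>S. 1 + (norm u)\<^sup>2 + \<eta>\<^sup>2 * M\<^sup>2 - 2 * \<eta> * (u \<bullet> e \<Omega>))
        = real (card S) * (1 + (norm u)\<^sup>2 + \<eta>\<^sup>2 * M\<^sup>2) - 2 * \<eta> * (\<Sum>\<Omega>\<in>S. u \<bullet> e \<Omega>)"
      by (simp add: sum_subtractf sum_distrib_left)
    also have "\<dots> / real (card S) = 1 + (norm u)\<^sup>2 + \<eta>\<^sup>2 * M\<^sup>2"
      using sum_e finS neS by (simp add: card_gt_0_iff)
    finally show ?thesis .
  qed
  have m_alt: "m = (1 / real n) *\<^sub>R (\<Sum>i=1..n. G i \<theta> - G i \<theta>s)"
    using zero by (simp add: m_def sum_subtractf)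
  have dm: "\<Delta> \<bullet> m \<ge> \<mu> * r\<^sup>2"
  proof -
    have "\<Delta> \<bullet> m = (1 / real n) * (\<Sum>i=1..n. (G i \<theta> - G i \<theta>s) \<bullet> \<Delta>)"
      by (simp add: m_alt inner_sum_right inner_commute)
    also have "\<dots> \<ge> (1 / real n) * (\<Sum>i=1..n. \<mu> * r\<^sup>2)"
      unfolding G_def r_def \<Delta>_def using npos by (intro mult_left_mono sum_mono A2 xh) auto
    moreover have "(1 / real n) * (\<Sum>i=1..n. \<mu> * r\<^sup>2) = \<mu> * r\<^sup>2" using npos by simp
    ultimately show ?thesis by simp
  qed
  have nm: "norm m \<le> K1 * r"
  proof -
    have "norm m \<le> (1 / real n) * (\<Sum>i=1..n. norm (G i \<theta> - G i \<theta>s))"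
      using npos by (simp add: m_alt norm_sum divide_right_mono)
    also have "\<dots> \<le> (1 / real n) * (\<Sum>i=1..n. K1 * r)"
    proof (intro mult_left_mono sum_mono)
      fix i assume i: "i \<in> {1..n}"
      have "norm (G i \<theta> - G i \<theta>s) \<le> K1 * norm (\<theta> - \<theta>s) + K2 * norm (xh i - xh i) * (norm \<theta> + norm \<theta>s + 1)"
        unfolding G_def by (rule A1) (auto intro: xh i)
      then show "norm (G i \<theta> - G i \<theta>s) \<le> K1 * r" by (simp add: r_def \<Delta>_def)
    qed simp
    also have "\<dots> = K1 * r" using npos by simp
    finally show ?thesis .
  qed
  have r0: "0 \<le> r" by (simp add: r_def)
  have nu: "(norm u)\<^sup>2 \<le> r\<^sup>2 - 2 * \<eta> * \<mu> * r\<^sup>2 + \<eta>\<^sup>2 * K1\<^sup>2 * r\<^sup>2"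
  proof -
    have e1: "(norm u)\<^sup>2 = r\<^sup>2 - 2 * \<eta> * (\<Delta> \<bullet> m) + \<eta>\<^sup>2 * (norm m)\<^sup>2"
      by (simp add: u_def norm_diff_sq r_def power_mult_distrib)
    have "(norm m)\<^sup>2 \<le> (K1 * r)\<^sup>2" using nm by (simp add: power_mono)
    then have e2: "\<eta>\<^sup>2 * (norm m)\<^sup>2 \<le> \<eta>\<^sup>2 * K1\<^sup>2 * r\<^sup>2"
      by (simp add: mult_left_mono power_mult_distrib mult.assoc)
    have "(2 * \<eta>) * (\<mu> * r\<^sup>2) \<le> (2 * \<eta>) * (\<Delta> \<bullet> m)" using dm eta_pos by (intro mult_left_mono) auto
    then have e3: "2 * \<eta> * \<mu> * r\<^sup>2 \<le> 2 * \<eta> * (\<Delta> \<bullet> m)" by (simp add: mult.assoc)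
    from e1 e2 e3 show ?thesis by linarith
  qed
  define w where "w = D\<^sup>2 * K2\<^sup>2"
  define s where "s = norm \<theta>s"
  have w0: "0 \<le> w" by (simp add: w_def)
  have den: "K1\<^sup>2 + 64 * D\<^sup>2 * K2\<^sup>2 > 0" using K1 by (simp add: add_pos_nonneg)
  have "\<eta> < \<mu> / (K1\<^sup>2 + 64 * D\<^sup>2 * K2\<^sup>2)" using eta by simp
  then have "\<eta> * (K1\<^sup>2 + 64 * w) \<le> \<mu>" using den by (simp add: field_simps w_def)
  then have "\<eta> * (\<eta> * (K1\<^sup>2 + 64 * w)) \<le> \<eta> * \<mu>"
    using eta_pos by (simp add: mult_left_mono)
  then have keyP: "0 \<le> \<eta> * \<mu> - \<eta>\<^sup>2 * (K1\<^sup>2 + 64 * w)"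
    by (simp add: power2_eq_square mult.assoc)
  have t: "norm \<theta> \<le> r + s" unfolding r_def s_def \<Delta>_def by (metis norm_triangle_sub add.commute)
  have i1: "(2 * norm \<theta> + 1)\<^sup>2 + (2 * norm \<theta> - 1)\<^sup>2 = 8 * (norm \<theta>)\<^sup>2 + 2"
    by (simp add: power2_eq_square algebra_simps)
  have i2: "(r + s)\<^sup>2 + (r - s)\<^sup>2 = 2 * r\<^sup>2 + 2 * s\<^sup>2"
    by (simp add: power2_eq_square algebra_simps)
  have i3: "(norm \<theta>)\<^sup>2 \<le> (r + s)\<^sup>2" using t by (simp add: power_mono)
  have tt: "(2 * norm \<theta> + 1)\<^sup>2 \<le> 16 * r\<^sup>2 + 16 * s\<^sup>2 + 2"
    using i1 i2 i3 zero_le_power2[of "2 * norm \<theta> - 1"] zero_le_power2[of "r - s"] by linarith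
  have "M\<^sup>2 = 4 * w * (2 * norm \<theta> + 1)\<^sup>2" by (simp add: M_def w_def power_mult_distrib)
  also have "\<dots> \<le> 4 * w * (16 * r\<^sup>2 + 16 * s\<^sup>2 + 2)" using tt w0 by (intro mult_left_mono) auto
  also have "\<dots> = 64 * w * r\<^sup>2 + 64 * w * s\<^sup>2 + 8 * w" by (simp add: algebra_simps)
  finally have MM: "\<eta>\<^sup>2 * M\<^sup>2 \<le> \<eta>\<^sup>2 * (64 * w * r\<^sup>2 + 64 * w * s\<^sup>2 + 8 * w)"
    by (rule mult_left_mono) simp
  have PR: "0 \<le> (\<eta> * \<mu> - \<eta>\<^sup>2 * (K1\<^sup>2 + 64 * w)) * r\<^sup>2" using keyP by simp
  have VV: "Vhat \<theta>s \<theta> = 1 + r\<^sup>2" by (simp add: Vhat_def r_def \<Delta>_def)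
  have ID: "((1 - \<eta> * \<mu>) * (1 + r\<^sup>2) + 2 * \<eta> * \<mu> - \<eta>\<^sup>2 * K1\<^sup>2 - 56 * \<eta>\<^sup>2 * D\<^sup>2 * K2\<^sup>2
           + 64 * \<eta>\<^sup>2 * D\<^sup>2 * K2\<^sup>2 * s\<^sup>2) - (1 + (r\<^sup>2 - 2 * \<eta> * \<mu> * r\<^sup>2 + \<eta>\<^sup>2 * K1\<^sup>2 * r\<^sup>2) + \<eta>\<^sup>2 * (64 * w * r\<^sup>2 + 64 * w * s\<^sup>2 + 8 * w))
  = (\<eta> * \<mu> - \<eta>\<^sup>2 * (K1\<^sup>2 + 64 * w)) * r\<^sup>2 + (\<eta> * \<mu> - \<eta>\<^sup>2 * (K1\<^sup>2 + 64 * w))"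
    unfolding w_def by (simp add: algebra_simps)
  have "Phat grad xh n b \<eta> (Vhat \<theta>s) \<theta> \<le>
           (1 - \<eta> * \<mu>) * (1 + r\<^sup>2) + 2 * \<eta> * \<mu> - \<eta>\<^sup>2 * K1\<^sup>2 - 56 * \<eta>\<^sup>2 * D\<^sup>2 * K2\<^sup>2
           + 64 * \<eta>\<^sup>2 * D\<^sup>2 * K2\<^sup>2 * s\<^sup>2"
    using Pbound nu MM PR keyP ID by linarith
  then show "Phat grad xh n b \<eta> (Vhat \<theta>s) \<theta> \<le>
           (1 - \<eta> * \<mu>) * Vhat \<theta>s \<theta> + 2 * \<eta> * \<mu> - \<eta>\<^sup>2 * K1\<^sup>2 - 56 * \<eta>\<^sup>2 * D\<^sup>2 * K2\<^sup>2
           + 64 * \<eta>\<^sup>2 * D\<^sup>2 * K2\<^sup>2 * (norm \<theta>s)\<^sup>2"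
    unfolding VV s_def .
qed

end
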